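(* Let $d\ge2$, $p\ge1$, $k\ge1$. Define $\psi:\mathcal{C}_k^{(d)}\to\mathbb{R}$ by $$\psi:=\frac{1}{dk+1}\sum_{j\ge p}\ \sum_{v\in\{1,\dots,d\}^j}\ \sum_{\substack{\mathcal{S}=\mathrm{Sh}(T;v_0,\dots,v_p=v)\\\text{for some }T\in\mathcal{C}_k^{(d)}}}\mathbf{1}_{\mathcal{S}},$$ where for each code $v$ the inner sum is over the distinct sets $\mathcal{S}$ arising as shuffle classes of the path of length $p$ ending at the vertex with code $v$ in some tree $T\in\mathcal{C}_k^{(d)}$ containing $v$. Then $\psi$ lies in the span of the length-$p$ shuffle indicators, and $$\sup_{T\in\mathcal{C}_k^{(d)}}|\psi(T)-1|\le\frac{C_{d,p}}{dk+1},\qquad C_{d,p}:=\frac{d^p-1}{d-1}.$$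
   Context: A $d$-Catalan tree is a rooted planar tree in which each vertex has $0$ or $d$ children; $\mathcal{C}_k^{(d)}$ is the set of those with $k$ internal vertices (so $dk+1$ vertices). Vertices are coded by words in $\bigcup_{j\ge0}\{1,\dots,d\}^j$: the root is the empty word and the children of the vertex with code $u$ are $u1,\dots,ud$ from left to right; the code length is the height. For a path $(v_0,\dots,v_p)$ ($v_i$ a child of $v_{i-1}$) in $T$, $\mathrm{Sh}(T;v_0,\dots,v_p)$ is the set of trees in $\mathcal{C}_k^{(d)}$ obtained by rearranging the $(d-1)p$ subtrees subtended by the siblings of $v_1,\dots,v_p$ among those positions; these are the length-$p$ shuffle classes, with indicators $\mathbf{1}_{\mathcal{S}}$. *)

theory Defs
  imports Complex_Main "HOL-Library.Sublist" "HOL-Library.Indicator_Function"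
begin

(* Trees are encoded as sets of vertex codes: words over {1..d} (nat lists). *)

definition is_catalan_tree :: "nat \<Rightarrow> nat list set \<Rightarrow> bool" where
  "is_catalan_tree d T \<longleftrightarrow>
     finite T \<and> [] \<in> T \<and>
     (\<forall>u\<in>T. set u \<subseteq> {1..d}) \<and>
     (\<forall>u c. u @ [c] \<in> T \<longrightarrow> u \<in> T) \<and>
     (\<forall>u\<in>T. (\<forall>c\<in>{1..d}. u @ [c] \<in> T) \<or> (\<forall>c\<in>{1..d}. u @ [c] \<notin> T))"

definition internal_vertices :: "nat list set \<Rightarrow> nat list set" where
  "internal_vertices T = {u \<in> T. \<exists>c. u @ [c] \<in> T}"

definition catalan_trees :: "nat \<Rightarrow> nat \<Rightarrow> nat list set set" where
  "catalan_trees d k = {T. is_catalan_tree d T \<and> card (internal_vertices T) = k}"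

definition subtree_at :: "nat list set \<Rightarrow> nat list \<Rightarrow> nat list set" where
  "subtree_at T u = {w. u @ w \<in> T}"

(* positions of the siblings of v_1,...,v_p, where v_p = v and v_0 is the
   ancestor of v at height |v| - p *)
definition sibling_positions :: "nat \<Rightarrow> nat list \<Rightarrow> nat \<Rightarrow> nat list set" where
  "sibling_positions d v p =
     {take i v @ [c] | i c. length v - p \<le> i \<and> i < length v \<and> c \<in> {1..d} \<and> c \<noteq> v ! i}"

(* Sh(T; v_0,...,v_p = v): trees in C_k^(d) obtained by rearranging the
   subtrees hanging at the sibling positions among those positions *)
definition shuffle_class :: "nat \<Rightarrow> nat \<Rightarrow> nat list set \<Rightarrow> nat list \<Rightarrow> nat \<Rightarrow> nat list set set" where
  "shuffle_class d k T v p =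
     {T' \<in> catalan_trees d k.
        \<exists>\<sigma>. bij_betw \<sigma> (sibling_positions d v p) (sibling_positions d v p) \<and>
            (\<forall>s\<in>sibling_positions d v p. subtree_at T' (\<sigma> s) = subtree_at T s) \<and>
            (\<forall>w. (\<forall>s\<in>sibling_positions d v p. \<not> prefix s w) \<longrightarrow> (w \<in> T' \<longleftrightarrow> w \<in> T))}"

definition shuffle_classes :: "nat \<Rightarrow> nat \<Rightarrow> nat \<Rightarrow> nat list set set set" where
  "shuffle_classes d k p =
     {shuffle_class d k T v p | T v. T \<in> catalan_trees d k \<and> v \<in> T \<and> p \<le> length v}"

(* psi; codes v of length >= p not occurring in any tree of C_k^(d) contribute
   an empty inner sum, so the outer sum is restricted to codes that occur *)
definition psi :: "nat \<Rightarrow> nat \<Rightarrow> nat \<Rightarrow> nat list set \<Rightarrow> real" where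
  "psi d k p T = (1 / real (d * k + 1)) *
     (\<Sum>v \<in> {v. p \<le> length v \<and> set v \<subseteq> {1..d} \<and> (\<exists>T'\<in>catalan_trees d k. v \<in> T')}.
        \<Sum>S \<in> {shuffle_class d k T' v p | T'. T' \<in> catalan_trees d k \<and> v \<in> T'}.
          indicator S T)"

end

theory Submission
  imports Defs
begin

lemma prefix_closed:
  assumes "is_catalan_tree d T" shows "u @ w \<in> T \<Longrightarrow> u \<in> T"
proof (induction w rule: rev_induct)
  case Nil then show ?case by simp
next
  case (snoc x w)
  have "(u @ w) @ [x] \<in> T" using snoc.prems by simp
  then have "u @ w \<in> T" using assms unfolding is_catalan_tree_def by blast
  then show ?case using snoc.IH by blast
qed

lemma take_in: "is_catalan_tree d T \<Longrightarrow> u \<in> T \<Longrightarrow> take i u \<in> T"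
  using prefix_closed[of d T "take i u" "drop i u"] by simp

lemma height:
  assumes "T \<in> catalan_trees d k" "u \<in> T" shows "length u \<le> k"
proof -
  have ct: "is_catalan_tree d T" and ck: "card (internal_vertices T) = k"
    using assms(1) by (auto simp: catalan_trees_def)
  have fin: "finite (internal_vertices T)"
    using ct unfolding is_catalan_tree_def internal_vertices_def by auto
  have inj: "inj_on (\<lambda>i. take i u) {..<length u}"
  proof (rule inj_onI)
    fix i j assume "i \<in> {..<length u}" "j \<in> {..<length u}" "take i u = take j u"
    then have "length (take i u) = length (take j u)" by simp
    then show "i = j" using \<open>i \<in> {..<length u}\<close> \<open>j \<in> {..<length u}\<close> by simp
  qed
  have "(\<lambda>i. take i u) ` {..<length u} \<subseteq> internal_vertices T"
  proof
    fix x assume "x \<in> (\<lambda>i. take i u) ` {..<length u}"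
    then obtain i where i: "i < length u" "x = take i u" by auto
    have "take i u @ [u ! i] = take (Suc i) u" using i(1) by (simp add: take_Suc_conv_app_nth)
    then have "take i u @ [u ! i] \<in> T" using take_in[OF ct assms(2)] by metis
    then show "x \<in> internal_vertices T" using i prefix_closed[OF ct]
      unfolding internal_vertices_def by blast
  qed
  from card_inj_on_le[OF inj this fin] show ?thesis using ck by simp
qed

lemma C_subset: "catalan_trees d k \<subseteq> Pow {xs. set xs \<subseteq> {1..d} \<and> length xs \<le> k}"
proof
  fix T assume T: "T \<in> catalan_trees d k"
  then have "is_catalan_tree d T" by (simp add: catalan_trees_def)
  then show "T \<in> Pow {xs. set xs \<subseteq> {1..d} \<and> length xs \<le> k}"
    using height[OF T] unfolding is_catalan_tree_def by auto
qed

lemma finite_C: "finite (catalan_trees d k)"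
  by (rule finite_subset[OF C_subset]) (simp add: finite_lists_length_le)

lemma card_tree:
  assumes "T \<in> catalan_trees d k" shows "card T = d * k + 1"
proof -
  have ct: "is_catalan_tree d T" and ck: "card (internal_vertices T) = k"
    using assms(1) by (auto simp: catalan_trees_def)
  let ?I = "internal_vertices T"
  let ?f = "\<lambda>(u, c). u @ [c :: nat]"
  have fin: "finite ?I"
    using ct unfolding is_catalan_tree_def internal_vertices_def by auto
  have eq: "T = insert [] (?f ` (?I \<times> {1..d}))"
  proof (rule set_eqI, rule iffI)
    fix w assume w: "w \<in> T"
    show "w \<in> insert [] (?f ` (?I \<times> {1..d}))"
    proof (cases "w = []")
      case False
      then have w': "w = butlast w @ [last w]" by simp
      have wT: "butlast w @ [last w] \<in> T" using w w' by simp
      have "butlast w \<in> T" using prefix_closed[OF ct wT] .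
      then have "butlast w \<in> ?I" using wT
        unfolding internal_vertices_def by blast
      moreover have "set w \<subseteq> {1..d}" using w ct unfolding is_catalan_tree_def by blast
      moreover have "last w \<in> set w" using False by simp
      ultimately have "butlast w \<in> ?I" "last w \<in> {1..d}" by blast+
      then show ?thesis using w' by (intro insertI2 image_eqI[where x="(butlast w, last w)"]) auto
    qed simp
  next
    fix w assume "w \<in> insert [] (?f ` (?I \<times> {1..d}))"
    then show "w \<in> T"
    proof
      assume "w = []" then show ?thesis using ct by (simp add: is_catalan_tree_def)
    next
      assume "w \<in> ?f ` (?I \<times> {1..d})"
      then obtain u c where uc: "u \<in> ?I" "c \<in> {1..d}" "w = u @ [c]" by auto
      then obtain c' where c': "u @ [c'] \<in> T" "u \<in> T" unfolding internal_vertices_def by auto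
      then have "c' \<in> {1..d}" using ct unfolding is_catalan_tree_def by auto
      then show ?thesis using ct c' uc unfolding is_catalan_tree_def by blast
    qed
  qed
  have inj: "inj_on ?f (?I \<times> {1..d})" by (rule inj_onI) auto
  have "card (?f ` (?I \<times> {1..d})) = k * d"
    using card_image[OF inj] ck by (simp add: card_cartesian_product)
  moreover have "[] \<notin> ?f ` (?I \<times> {1..d})" by auto
  moreover have "finite (?f ` (?I \<times> {1..d}))" using fin by simp
  ultimately show ?thesis by (subst eq) simp
qed

lemma not_prefix_v: "s \<in> sibling_positions d v p \<Longrightarrow> \<not> prefix s v"
proof
  assume s: "s \<in> sibling_positions d v p" and pr: "prefix s v"
  then obtain i c where ic: "s = take i v @ [c]" "i < length v" "c \<noteq> v ! i"
    unfolding sibling_positions_def by auto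
  from pr obtain z where vz: "v = s @ z" by (auto simp: prefix_def)
  have ls: "length s = Suc i" using ic(1,2) by simp
  have "take (Suc i) v = take (length s) (s @ z)" by (simp only: vz ls)
  also have "\<dots> = s" by simp
  finally have "take (Suc i) v = s" .
  moreover have "take (Suc i) v = take i v @ [v ! i]" using ic by (simp add: take_Suc_conv_app_nth)
  ultimately show False using ic by simp
qed

definition srel :: "nat \<Rightarrow> nat list \<Rightarrow> nat \<Rightarrow> nat list set \<Rightarrow> nat list set \<Rightarrow> bool" where
  "srel d v p T T' \<longleftrightarrow>
        (\<exists>\<sigma>. bij_betw \<sigma> (sibling_positions d v p) (sibling_positions d v p) \<and>
            (\<forall>s\<in>sibling_positions d v p. subtree_at T' (\<sigma> s) = subtree_at T s) \<and>
            (\<forall>w. (\<forall>s\<in>sibling_positions d v p. \<not> prefix s w) \<longrightarrow> (w \<in> T' \<longleftrightarrow> w \<in> T)))"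

lemma sc_def': "shuffle_class d k T v p = {T' \<in> catalan_trees d k. srel d v p T T'}"
  unfolding shuffle_class_def srel_def by simp

lemma srel_refl: "srel d v p T T"
  unfolding srel_def by (rule exI[of _ id]) auto

lemma srel_sym: assumes "srel d v p T T'" shows "srel d v p T' T"
proof -
  let ?SP = "sibling_positions d v p"
  obtain \<sigma> where s: "bij_betw \<sigma> ?SP ?SP" "\<forall>s\<in>?SP. subtree_at T' (\<sigma> s) = subtree_at T s"
    "\<forall>w. (\<forall>s\<in>?SP. \<not> prefix s w) \<longrightarrow> (w \<in> T' \<longleftrightarrow> w \<in> T)"
    using assms unfolding srel_def by blast
  have "bij_betw (inv_into ?SP \<sigma>) ?SP ?SP" using s(1) by (rule bij_betw_inv_into)
  moreover have "\<forall>s\<in>?SP. subtree_at T (inv_into ?SP \<sigma> s) = subtree_at T' s"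
  proof
    fix x assume x: "x \<in> ?SP"
    have "inv_into ?SP \<sigma> x \<in> ?SP" using calculation x by (meson bij_betwE)
    then have "subtree_at T' (\<sigma> (inv_into ?SP \<sigma> x)) = subtree_at T (inv_into ?SP \<sigma> x)" using s(2) by blast
    then show "subtree_at T (inv_into ?SP \<sigma> x) = subtree_at T' x"
      using bij_betw_inv_into_right[OF s(1) x] by simp
  qed
  ultimately show ?thesis using s(3) unfolding srel_def by blast
qed

lemma srel_trans: assumes "srel d v p T T'" "srel d v p T' T''" shows "srel d v p T T''"
proof -
  let ?SP = "sibling_positions d v p"
  obtain \<sigma> where s: "bij_betw \<sigma> ?SP ?SP" "\<forall>s\<in>?SP. subtree_at T' (\<sigma> s) = subtree_at T s"
    "\<forall>w. (\<forall>s\<in>?SP. \<not> prefix s w) \<longrightarrow> (w \<in> T' \<longleftrightarrow> w \<in> T)"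
    using assms(1) unfolding srel_def by blast
  obtain \<tau> where t: "bij_betw \<tau> ?SP ?SP" "\<forall>s\<in>?SP. subtree_at T'' (\<tau> s) = subtree_at T' s"
    "\<forall>w. (\<forall>s\<in>?SP. \<not> prefix s w) \<longrightarrow> (w \<in> T'' \<longleftrightarrow> w \<in> T')"
    using assms(2) unfolding srel_def by blast
  have "bij_betw (\<tau> \<circ> \<sigma>) ?SP ?SP" using s(1) t(1) by (rule bij_betw_trans)
  moreover have "\<forall>s\<in>?SP. subtree_at T'' ((\<tau> \<circ> \<sigma>) s) = subtree_at T s"
  proof
    fix x assume x: "x \<in> ?SP"
    have "\<sigma> x \<in> ?SP" using s(1) x by (meson bij_betwE)
    then show "subtree_at T'' ((\<tau> \<circ> \<sigma>) x) = subtree_at T x" using s(2) t(2) x by simp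
  qed
  ultimately show ?thesis using s(3) t(3) unfolding srel_def by blast
qed

lemma class_eq:
  assumes "T \<in> shuffle_class d k T' v p"
  shows "shuffle_class d k T v p = shuffle_class d k T' v p"
proof -
  have r: "srel d v p T' T" using assms by (simp add: sc_def')
  then have "srel d v p T T'" by (rule srel_sym)
  then show ?thesis unfolding sc_def' using r srel_trans by blast
qed

lemma v_in_class:
  assumes "T \<in> shuffle_class d k T' v p" "v \<in> T'" shows "v \<in> T"
  using assms not_prefix_v unfolding shuffle_class_def by blast

lemma self_in_class: "T \<in> catalan_trees d k \<Longrightarrow> T \<in> shuffle_class d k T v p"
  using srel_refl by (simp add: sc_def')

definition cls where
  "cls d k v p = {shuffle_class d k T' v p | T'. T' \<in> catalan_trees d k \<and> v \<in> T'}"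

lemma finite_cls: "finite (cls d k v p)"
proof -
  have "cls d k v p \<subseteq> (\<lambda>T'. shuffle_class d k T' v p) ` catalan_trees d k"
    unfolding cls_def by auto
  then show ?thesis by (rule finite_subset) (rule finite_imageI[OF finite_C])
qed

lemma inner:
  assumes T: "T \<in> catalan_trees d k"
  shows "(\<Sum>S\<in>cls d k v p. indicator S T) = (if v \<in> T then 1 else (0::real))"
proof (cases "v \<in> T")
  case True
  let ?S0 = "shuffle_class d k T v p"
  have mem: "?S0 \<in> cls d k v p" using T True unfolding cls_def by blast
  have "(\<Sum>S\<in>cls d k v p. indicator S T) = indicator ?S0 T + (\<Sum>S\<in>cls d k v p - {?S0}. indicator S T)"
    using sum.remove[OF finite_cls mem] by simp
  also have "(\<Sum>S\<in>cls d k v p - {?S0}. indicator S T) = (0::real)"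
  proof (rule sum.neutral, rule ballI)
    fix S assume S: "S \<in> cls d k v p - {?S0}"
    then obtain T' where "S = shuffle_class d k T' v p" unfolding cls_def by auto
    then have "T \<notin> S"
    proof (intro notI)
      assume "S = shuffle_class d k T' v p" "T \<in> S"
      then have "?S0 = S" using class_eq by blast
      then show False using S by blast
    qed
    then show "indicator S T = (0::real)" by simp
  qed
  finally show ?thesis using True self_in_class[OF T] by simp
next
  case False
  have "(\<Sum>S\<in>cls d k v p. indicator S T) = (0::real)"
  proof (rule sum.neutral, rule ballI)
    fix S assume S: "S \<in> cls d k v p"
    then obtain T' where "S = shuffle_class d k T' v p" "v \<in> T'" unfolding cls_def by auto
    then have "T \<notin> S" using False v_in_class by blast
    then show "indicator S T = (0::real)" by simp
  qed
  then show ?thesis using False by simp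
qed

definition VV where
  "VV d k p = {v. p \<le> length v \<and> set v \<subseteq> {1..d} \<and> (\<exists>T'\<in>catalan_trees d k. v \<in> T')}"

lemma finite_VV: "finite (VV d k p)"
proof -
  have "VV d k p \<subseteq> {xs. set xs \<subseteq> {1..d} \<and> length xs \<le> k}"
    unfolding VV_def using height by blast
  then show ?thesis by (rule finite_subset) (simp add: finite_lists_length_le)
qed

lemma psi_alt: "psi d k p T = (1 / real (d * k + 1)) * (\<Sum>v\<in>VV d k p. \<Sum>S\<in>cls d k v p. indicator S T)"
  unfolding psi_def VV_def cls_def by simp

lemma psi_count:
  assumes T: "T \<in> catalan_trees d k"
  shows "psi d k p T = real (card {v\<in>T. p \<le> length v}) / real (d * k + 1)"
proof -
  have "(\<Sum>v\<in>VV d k p. \<Sum>S\<in>cls d k v p. indicator S T) = (\<Sum>v\<in>VV d k p. if v \<in> T then 1 else (0::real))"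
    using inner[OF T] by simp
  also have "\<dots> = (\<Sum>v\<in>{v \<in> VV d k p. v \<in> T}. 1)"
    using sum.inter_filter[OF finite_VV, where g="\<lambda>_. (1::real)" and P="\<lambda>v. v \<in> T"] by simp
  also have "{v \<in> VV d k p. v \<in> T} = {v\<in>T. p \<le> length v}"
    using T unfolding VV_def catalan_trees_def is_catalan_tree_def by auto
  finally show ?thesis by (simp add: psi_alt)
qed

theorem proposition6p1:
  fixes d p k :: nat
  assumes "d \<ge> 2" and "p \<ge> 1" and "k \<ge> 1"
  shows "(\<exists>c :: nat list set set \<Rightarrow> real.
            \<forall>T\<in>catalan_trees d k.
              psi d k p T = (\<Sum>S\<in>shuffle_classes d k p. c S * indicator S T))
       \<and> (\<forall>T\<in>catalan_trees d k.
            \<bar>psi d k p T - 1\<bar> \<le> ((real d ^ p - 1) / (real d - 1)) / real (d * k + 1))"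
proof
  let ?U = "shuffle_classes d k p"
  let ?V = "VV d k p"
  have finU: "finite ?U"
  proof -
    have "?U \<subseteq> Pow (catalan_trees d k)" unfolding shuffle_classes_def shuffle_class_def by auto
    then show ?thesis by (rule finite_subset) (simp add: finite_C)
  qed
  have sub: "cls d k v p \<subseteq> ?U" if "v \<in> ?V" for v
    using that unfolding cls_def VV_def shuffle_classes_def by blast
  define c where "c S = real (card {v \<in> ?V. S \<in> cls d k v p}) / real (d * k + 1)" for S
  show "\<exists>c :: nat list set set \<Rightarrow> real. \<forall>T\<in>catalan_trees d k.
              psi d k p T = (\<Sum>S\<in>?U. c S * indicator S T)"
  proof (intro exI ballI)
    fix T assume T: "T \<in> catalan_trees d k"
    have "(\<Sum>v\<in>?V. \<Sum>S\<in>cls d k v p. indicator S T)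
        = (\<Sum>v\<in>?V. \<Sum>S\<in>?U. if S \<in> cls d k v p then indicator S T else (0::real))"
    proof (rule sum.cong[OF refl])
      fix v assume v: "v \<in> ?V"
      have "{S \<in> ?U. S \<in> cls d k v p} = cls d k v p" using sub[OF v] by blast
      then show "(\<Sum>S\<in>cls d k v p. indicator S T)
          = (\<Sum>S\<in>?U. if S \<in> cls d k v p then indicator S T else (0::real))"
        using sum.inter_filter[OF finU, where g="\<lambda>S. indicator S T :: real" and P="\<lambda>S. S \<in> cls d k v p"] by simp
    qed
    also have "\<dots> = (\<Sum>S\<in>?U. \<Sum>v\<in>?V. if S \<in> cls d k v p then indicator S T else (0::real))"
      by (rule sum.swap)
    also have "\<dots> = (\<Sum>S\<in>?U. real (card {v \<in> ?V. S \<in> cls d k v p}) * indicator S T)"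
    proof (rule sum.cong[OF refl])
      fix S
      show "(\<Sum>v\<in>?V. if S \<in> cls d k v p then indicator S T else (0::real))
         = real (card {v \<in> ?V. S \<in> cls d k v p}) * indicator S T"
        using sum.inter_filter[OF finite_VV, where g="\<lambda>_. indicator S T :: real" and P="\<lambda>v. S \<in> cls d k v p"] by simp
    qed
    finally show "psi d k p T = (\<Sum>S\<in>?U. c S * indicator S T)"
      unfolding psi_alt c_def by (simp add: sum_distrib_left)
  qed
next
  show "\<forall>T\<in>catalan_trees d k.
            \<bar>psi d k p T - 1\<bar> \<le> ((real d ^ p - 1) / (real d - 1)) / real (d * k + 1)"
  proof
    fix T assume T: "T \<in> catalan_trees d k"
    have ct: "is_catalan_tree d T" using T by (simp add: catalan_trees_def)
    have finT: "finite T" using ct by (simp add: is_catalan_tree_def)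
    let ?A = "{v\<in>T. p \<le> length v}"
    let ?B = "{v\<in>T. length v < p}"
    have "T = ?A \<union> ?B" by auto
    moreover have "?A \<inter> ?B = {}" by auto
    moreover have "finite ?A" "finite ?B" using finT by auto
    ultimately have cT: "card T = card ?A + card ?B"
      using card_Un_disjoint[of ?A ?B] by simp
    have "?B \<subseteq> {xs. set xs \<subseteq> {1..d} \<and> length xs \<le> p - 1}"
      using ct assms(2) unfolding is_catalan_tree_def by auto
    then have "card ?B \<le> card {xs. set xs \<subseteq> {1..d} \<and> length xs \<le> p - 1}"
      by (intro card_mono) (simp_all add: finite_lists_length_le)
    also have "\<dots> = (\<Sum>i\<le>p-1. d ^ i)" by (simp add: card_lists_length_le)
    also have "{..p-1} = {..<p}" using assms(2) by auto
    finally have "card ?B \<le> (\<Sum>i<p. d ^ i)" .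
    then have "real (card ?B) \<le> real (\<Sum>i<p. d ^ i)" by (rule of_nat_mono)
    then have cB: "real (card ?B) \<le> (\<Sum>i<p. real d ^ i)" by simp
    have geo: "(\<Sum>i<p. real d ^ i) = (real d ^ p - 1) / (real d - 1)"
      using assms(1) by (simp add: sum_gp_strict field_simps)
    have "psi d k p T - 1 = - real (card ?B) / real (d * k + 1)"
    proof -
      have e: "real (card ?A) = real (d*k+1) - real (card ?B)" using cT card_tree[OF T] by simp
      have N: "real (d*k+1) \<noteq> 0" by (metis of_nat_eq_0_iff add_is_0 one_neq_zero)
      show ?thesis unfolding psi_count[OF T] e using N by (simp add: diff_divide_distrib)
    qed
    then have "\<bar>psi d k p T - 1\<bar> = real (card ?B) / real (d * k + 1)" by simp
    also have "\<dots> \<le> ((real d ^ p - 1) / (real d - 1)) / real (d * k + 1)"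
      using cB geo by (intro divide_right_mono) simp_all
    finally show "\<bar>psi d k p T - 1\<bar> \<le> ((real d ^ p - 1) / (real d - 1)) / real (d * k + 1)" .
  qed
qed

end
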